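(* Assume the Collatz conjecture: for every positive integer $n$ there is $j\ge 0$ with $T_0^{(j)}(n)=1$. Then for every integer $k\ge 0$ and every positive integer $n$, the $T_k$-trajectory $n, T_k(n), T_k^{(2)}(n),\dots$ eventually enters the cycle $3^k\to 2\cdot 3^k\to 3^k$.
   Context: For an integer $k\ge 0$, define $T_k$ on the positive integers by $T_k(n)=(3n+3^k)/2$ if $n$ is odd and $T_k(n)=n/2$ if $n$ is even. In particular $T_0(n)=(3n+1)/2$ for odd $n$ and $n/2$ for even $n$. For any map $T$, $T^{(j)}$ denotes its $j$-fold iterate, with $T^{(0)}$ the identity. *)

theory Defs
  imports Main
begin

text \<open>The generalized Collatz map T_k on positive integers (modelled on nat):
  T_k(n) = (3n + 3^k)/2 for odd n, n/2 for even n.  For odd n, 3n + 3^k is even,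
  so the division is exact.\<close>
definition T :: "nat \<Rightarrow> nat \<Rightarrow> nat" where
  "T k n = (if odd n then (3 * n + 3 ^ k) div 2 else n div 2)"

end

theory Submission
  imports Defs
begin

lemma T_pos: "n > 0 \<Longrightarrow> T k n > 0"
proof (cases "odd n")
  case True
  assume "n > 0"
  have "3 * n + 3^k \<ge> (2::nat)" using \<open>n > 0\<close> by linarith
  then show ?thesis using True unfolding T_def by simp
next
  case False
  assume "n > 0"
  then have "n \<ge> 2" using False by presburger
  then show ?thesis using False unfolding T_def by simp
qed

lemma dvd_half: "(c::nat) dvd x \<Longrightarrow> odd c \<Longrightarrow> even x \<Longrightarrow> c dvd x div 2"
proof -
  assume a: "c dvd x" "odd c" "even x"
  have "coprime c 2" using a(2) by simp
  hence "c * 2 dvd x" using a by (simp add: divides_mult)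
  then obtain q where "x = c * 2 * q" by blast
  thus ?thesis by simp
qed

lemma L1: "3^a dvd n \<Longrightarrow> a < k \<Longrightarrow> odd n \<Longrightarrow> (3::nat)^(a+1) dvd T k n"
proof -
  assume a: "3^a dvd n" "a < k" "odd n"
  have "(3::nat)^(a+1) dvd 3*n" using a(1) by simp
  moreover have "(3::nat)^(a+1) dvd 3^k" using a(2) le_imp_power_dvd[of "a+1" k "3::nat"] by linarith
  ultimately have "(3::nat)^(a+1) dvd 3*n + 3^k" by simp
  moreover have "even (3*n + 3^k)" using a(3) by simp
  ultimately show ?thesis unfolding T_def using a(3) by (simp add: dvd_half)
qed

lemma L2: "(3::nat)^a dvd n \<Longrightarrow> even n \<Longrightarrow> 3^a dvd T k n"
  unfolding T_def by (simp add: dvd_half)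

lemma main: "\<forall>a n. n > 0 \<longrightarrow> k - a = d \<longrightarrow> (3::nat)^a dvd n \<longrightarrow> a \<le> k \<longrightarrow>
   (\<exists>j. 3^k dvd (T k ^^ j) n \<and> (T k ^^ j) n > 0)"
proof (induction d)
  case 0
  show ?case
  proof (intro allI impI)
    fix a n :: nat
    assume h: "n > 0" "k - a = 0" "3^a dvd n" "a \<le> k"
    then have "a = k" by simp
    then have "3^k dvd (T k ^^ 0) n \<and> (T k ^^ 0) n > 0" using h by simp
    then show "\<exists>j. 3^k dvd (T k ^^ j) n \<and> (T k ^^ j) n > 0" by blast
  qed
next
  case (Suc d)
  show ?case
  proof (intro allI impI)
    fix a n :: nat
    assume h: "k - a = Suc d" "3^a dvd n" "a \<le> k"
    show "n > 0 \<Longrightarrow> \<exists>j. 3^k dvd (T k ^^ j) n \<and> (T k ^^ j) n > 0"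
      using h(2)
    proof (induction n rule: less_induct)
      case (less n)
      show ?case
      proof (cases "even n")
        case True
        have "n div 2 < n" "n div 2 > 0" using less.prems True by auto
        moreover have "T k n = n div 2" using True by (simp add: T_def)
        moreover have "3^a dvd T k n" using L2 less.prems True by blast
        ultimately obtain j where "3^k dvd (T k ^^ j) (T k n) \<and> (T k ^^ j) (T k n) > 0"
          using less.IH by metis
        then show ?thesis by (metis comp_apply funpow_Suc_right)
      next
        case False
        have "3^(a+1) dvd T k n" using L1 less.prems False h by simp
        moreover have "T k n > 0" using T_pos less.prems by blast
        moreover have "k - (a+1) = d" "a + 1 \<le> k" using h by auto
        ultimately obtain j where "3^k dvd (T k ^^ j) (T k n) \<and> (T k ^^ j) (T k n) > 0"
          using Suc.IH by blast
        then show ?thesis by (metis comp_apply funpow_Suc_right)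
      qed
    qed
  qed
qed

lemma Tmul: "T k (3^k * m) = 3^k * T 0 m"
proof (cases "even m")
  case True
  then have "3^k * m div 2 = 3^k * (m div 2)" by (metis div_mult_swap)
  then show ?thesis unfolding T_def using True by simp
next
  case False
  have "3 * (3^k * m) + 3^k = 3^k * (3*m+1)" by (simp add: algebra_simps)
  moreover have "even (3*m+1)" using False by simp
  moreover have "3^k * (3*m+1) div 2 = 3^k * ((3*m+1) div 2)" using \<open>even (3*m+1)\<close> by (metis div_mult_swap)
  ultimately show ?thesis unfolding T_def using False by simp
qed

lemma Tmul_pow: "(T k ^^ j) (3^k * m) = 3^k * (T 0 ^^ j) m"
  by (induction j) (simp_all add: Tmul)

theorem corollary1:
  assumes collatz: "\<forall>n::nat. n > 0 \<longrightarrow> (\<exists>j. (T 0 ^^ j) n = 1)"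
  shows "\<forall>(k::nat) (n::nat). n > 0 \<longrightarrow>
           (\<exists>j. (T k ^^ j) n = 3 ^ k \<or> (T k ^^ j) n = 2 * 3 ^ k)"
proof (intro allI impI)
  fix k n :: nat
  assume n: "n > 0"
  obtain j where j: "3^k dvd (T k ^^ j) n" "(T k ^^ j) n > 0"
  proof -
    have "\<forall>a n. n > 0 \<longrightarrow> k - a = k - 0 \<longrightarrow> (3::nat)^a dvd n \<longrightarrow> a \<le> k \<longrightarrow>
      (\<exists>j. 3^k dvd (T k ^^ j) n \<and> (T k ^^ j) n > 0)" by (rule main)
    then have "n > 0 \<longrightarrow> k - 0 = k - 0 \<longrightarrow> (3::nat)^0 dvd n \<longrightarrow> 0 \<le> k \<longrightarrow>
      (\<exists>j. 3^k dvd (T k ^^ j) n \<and> (T k ^^ j) n > 0)" by blast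
    then show ?thesis using n that by auto
  qed
  then obtain m where m: "(T k ^^ j) n = 3^k * m" by blast
  with j have "m > 0" by (metis mult_0_right not_less0 gr0I)
  then obtain i where i: "(T 0 ^^ i) m = 1" using collatz by blast
  have "(T k ^^ (i + j)) n = 3^k"
    by (simp add: funpow_add m Tmul_pow i)
  thus "\<exists>j. (T k ^^ j) n = 3 ^ k \<or> (T k ^^ j) n = 2 * 3 ^ k" by blast
qed

end
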